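(* Let $G$, $H$, the supervisors with $\Sigma_{o,i},\Sigma_{c,i},N_{o,i}$, a controllable event $\sigma\in\Sigma_c$, $N=\max\{N_{o,i}:i\in I^c(\sigma)\}$, and the verifiers $V^k_\sigma$ ($k=0,\dots,N$) with reachable state sets $X^k_\sigma$ be as in the context. Then $\mathcal{L}(H)$ is delay coobservable w.r.t. $N_{o,1},\dots,N_{o,n}$, $\sigma$, and $\mathcal{L}(G)$ if and only if for every $k\in\{0,1,\dots,N\}$ there is no state $(q,(q_i)_{i\in I^c(\sigma)},k)\in X^k_\sigma$ with $\sigma\in\Gamma(q)\setminus\Gamma_H(q)$ and $\sigma\in\Gamma^{aug}_{H,N_{o,i}}(q_i)$ for all $i\in I^c(\sigma)$.
   Context: $G=(Q,\Sigma,\delta,\Gamma,q_0,Q_m)$ is a deterministic finite automaton (transition function extended to strings; $\Gamma(q)$ = set of events defined at $q$; $\mathcal{L}(G)$ its generated language). $H=(Q_H,\Sigma,\delta_H,\Gamma_H,q_0,Q_{m,H})$ is a sub-automaton of $G$. For a string $s$, $|s|$ is its length, $s_{-m}$ its prefix of length $\max\{0,|s|-m\}$, $\Sigma^{\le M}$ the strings of length at most $M$. Supervisors $I=\{1,\dots,n\}$: supervisor $i$ has observable events $\Sigma_{o,i}$, $\Sigma_{uo,i}=\Sigma\setminus\Sigma_{o,i}$, controllable events $\Sigma_{c,i}$, delay bound $N_{o,i}\in\mathbb{N}$; $\Sigma_c=\bigcup_i\Sigma_{c,i}$, $I^c(\sigma)=\{i:\sigma\in\Sigma_{c,i}\}$.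 $P_i$ is natural projection onto $\Sigma_{o,i}^*$; $\Theta_i^{N_{o,i}}(s)=\{P_i(s_{-m}):0\le m\le N_{o,i}\}$ for $s\in\mathcal{L}(G)$; $(\Theta_i^{N_{o,i}})^{-1}(t)=\{u\in\mathcal{L}(G):t\in\Theta_i^{N_{o,i}}(u)\}$, extended to sets elementwise. $\mathcal{L}(H)$ is delay coobservable w.r.t. $N_{o,1},\dots,N_{o,n}$, $\sigma$, and $\mathcal{L}(G)$ if for every $s\in\mathcal{L}(H)$ with $s\sigma\in\mathcal{L}(G)\setminus\mathcal{L}(H)$ there is $i\in I^c(\sigma)$ with $(\Theta_i^{N_{o,i}})^{-1}(\Theta_i^{N_{o,i}}(s))\sigma\cap\mathcal{L}(H)=\emptyset$. Augmented automaton $H^{aug}_N$: states $Q_H\cup\{q_{dis}\}$; for $q\in Q_H$, $e\in\Sigma$: $\delta^{aug}(q,e)=\delta_H(q,e)$ if $e\in\Gamma_H(q)$, $=q_{dis}$ if $e\notin\Gamma_H(q)$ and $e\in\Gamma_H(\delta_H(q,s'))$ for some $s'\in\Sigma^{\le N}$ with $\delta_H(q,s')$ defined, undefined otherwise; $\Gamma^{aug}_{H,N}(q)$ is the set of events defined at $q$ in $H^{aug}_N$. For $k\in\{0,\dots,N\}$ the verifier $V^k_\sigma$ has states $(q,(q_i)_{i\in I^c(\sigma)},d)$ with $q,q_i\in Q_H$, $d\in[0,k]$. Initial states: for $k<N$, the single state $(q_0,(q_0)_i,0)$; for $k=N$, all $(q,(q_i)_i,0)$ such that there exist $t\in\mathcal{L}(H)$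 with $q=\delta_H(q_0,t)$ and, for each $i\in I^c(\sigma)$, $s_i\in\mathcal{L}(H)$ with $q_i=\delta_H(q_0,s_i)$ and $P_i(s_i)=P_i(t)$. At a state $(q,(q_i)_i,d)$ and for $e\in\Sigma$, each $i\in I^c(\sigma)$ falls in one case: C1: $k-d>N_{o,i}$, $e\in\Sigma_{o,i}$; C2: $k-d>N_{o,i}$, $e\in\Sigma_{uo,i}$; C3: $k-d\le N_{o,i}$, $\sigma\notin\Gamma^{aug}_{H,N_{o,i}}(q_i)$, $e\in\Sigma_{o,i}$; C4: $k-d\le N_{o,i}$, $\sigma\notin\Gamma^{aug}_{H,N_{o,i}}(q_i)$, $e\in\Sigma_{uo,i}$; C5: $k-d\le N_{o,i}$, $\sigma\in\Gamma^{aug}_{H,N_{o,i}}(q_i)$. Type-1 transition: if $d+1\le k$, $\delta_H(q,e)$ is defined, and $\delta_H(q_i,e)$ is defined for every $i$ in C1 or C3, there is a transition to $(\delta_H(q,e),(q_i')_i,d+1)$ with $q_i'=\delta_H(q_i,e)$ for $i$ in C1 or C3 and $q_i'=q_i$ otherwise. Type-2 transition: for each $i$ in C2 or C4 with $\delta_H(q_i,e)$ defined, there is a transition to the state obtained by replacing $q_i$ by $\delta_H(q_i,e)$, all other components unchanged. $X^k_\sigma$ is the set of states of $V^k_\sigma$ reachable from its initial state(s). *)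

theory Defs
  imports Main
begin

text \<open>Marked states play no role in the statement and are omitted.\<close>

fun dstar :: "('q \<Rightarrow> 'e \<Rightarrow> 'q option) \<Rightarrow> 'q \<Rightarrow> 'e list \<Rightarrow> 'q option" where
  "dstar \<delta> q [] = Some q"
| "dstar \<delta> q (e # s) = (case \<delta> q e of None \<Rightarrow> None | Some q' \<Rightarrow> dstar \<delta> q' s)"

definition Gam :: "('q \<Rightarrow> 'e \<Rightarrow> 'q option) \<Rightarrow> 'q \<Rightarrow> 'e set" where
  "Gam \<delta> q = {e. \<delta> q e \<noteq> None}"

definition lang :: "('q \<Rightarrow> 'e \<Rightarrow> 'q option) \<Rightarrow> 'q \<Rightarrow> 'e list set" where
  "lang \<delta> q0 = {s. dstar \<delta> q0 s \<noteq> None}"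

definition is_DFA :: "'e set \<Rightarrow> 'q set \<Rightarrow> ('q \<Rightarrow> 'e \<Rightarrow> 'q option) \<Rightarrow> 'q \<Rightarrow> bool" where
  "is_DFA Sig Q \<delta> q0 \<longleftrightarrow> finite Sig \<and> finite Q \<and> q0 \<in> Q \<and>
     (\<forall>q e q'. \<delta> q e = Some q' \<longrightarrow> q \<in> Q \<and> e \<in> Sig \<and> q' \<in> Q)"

definition is_subaut ::
  "'e set \<Rightarrow> 'q set \<Rightarrow> ('q \<Rightarrow> 'e \<Rightarrow> 'q option) \<Rightarrow> 'q set \<Rightarrow> ('q \<Rightarrow> 'e \<Rightarrow> 'q option) \<Rightarrow> 'q \<Rightarrow> bool" where
  "is_subaut Sig Q \<delta> QH \<delta>H q0 \<longleftrightarrow> is_DFA Sig QH \<delta>H q0 \<and> QH \<subseteq> Q \<and>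
     (\<forall>q e q'. \<delta>H q e = Some q' \<longrightarrow> \<delta> q e = Some q')"

definition proj :: "'e set \<Rightarrow> 'e list \<Rightarrow> 'e list" where
  "proj So s = filter (\<lambda>e. e \<in> So) s"

text \<open>s_{-m}: prefix of length max 0 (|s| - m)\<close>
definition trunc :: "'e list \<Rightarrow> nat \<Rightarrow> 'e list" where
  "trunc s m = take (length s - m) s"

definition Theta :: "'e set \<Rightarrow> nat \<Rightarrow> 'e list \<Rightarrow> 'e list set" where
  "Theta So No s = {proj So (trunc s m) | m. m \<le> No}"

definition Theta_inv :: "'e list set \<Rightarrow> 'e set \<Rightarrow> nat \<Rightarrow> 'e list \<Rightarrow> 'e list set" where
  "Theta_inv LG So No t = {u \<in> LG. t \<in> Theta So No u}"

definition Theta_inv_set :: "'e list set \<Rightarrow> 'e set \<Rightarrow> nat \<Rightarrow> 'e list set \<Rightarrow> 'e list set" where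
  "Theta_inv_set LG So No T = (\<Union>t\<in>T. Theta_inv LG So No t)"

definition Ic :: "nat \<Rightarrow> (nat \<Rightarrow> 'e set) \<Rightarrow> 'e \<Rightarrow> nat set" where
  "Ic n Sc \<sigma> = {i \<in> {1..n}. \<sigma> \<in> Sc i}"

definition delay_coobservable ::
  "'e list set \<Rightarrow> 'e list set \<Rightarrow> nat \<Rightarrow> (nat \<Rightarrow> 'e set) \<Rightarrow> (nat \<Rightarrow> 'e set) \<Rightarrow> (nat \<Rightarrow> nat) \<Rightarrow> 'e \<Rightarrow> bool" where
  "delay_coobservable LH LG n So Sc No \<sigma> \<longleftrightarrow>
     (\<forall>s \<in> LH. s @ [\<sigma>] \<in> LG - LH \<longrightarrow>
        (\<exists>i \<in> Ic n Sc \<sigma>.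
           {u @ [\<sigma>] | u. u \<in> Theta_inv_set LG (So i) (No i) (Theta (So i) (No i) s)} \<inter> LH = {}))"

datatype 'q aug_state = Reg 'q | Dis

definition delta_aug ::
  "'e set \<Rightarrow> ('q \<Rightarrow> 'e \<Rightarrow> 'q option) \<Rightarrow> nat \<Rightarrow> 'q \<Rightarrow> 'e \<Rightarrow> 'q aug_state option" where
  "delta_aug Sig \<delta>H N q e =
     (if e \<in> Gam \<delta>H q then map_option Reg (\<delta>H q e)
      else if (\<exists>s' q'. s' \<in> lists Sig \<and> length s' \<le> N \<and> dstar \<delta>H q s' = Some q' \<and> e \<in> Gam \<delta>H q')
      then Some Dis else None)"

definition Gam_aug :: "'e set \<Rightarrow> ('q \<Rightarrow> 'e \<Rightarrow> 'q option) \<Rightarrow> nat \<Rightarrow> 'q \<Rightarrow> 'e set" where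
  "Gam_aug Sig \<delta>H N q = {e. delta_aug Sig \<delta>H N q e \<noteq> None}"

text \<open>Verifier states: (q, qs, d); the tuple (q_i) for i in Ic(sigma) is represented by a
function qs :: nat => 'q, whose values outside Ic(sigma) are kept at q0.\<close>

type_synonym 'q vstate = "'q \<times> (nat \<Rightarrow> 'q) \<times> nat"

definition ver_init ::
  "'e set \<Rightarrow> ('q \<Rightarrow> 'e \<Rightarrow> 'q option) \<Rightarrow> 'q \<Rightarrow> nat \<Rightarrow> (nat \<Rightarrow> 'e set) \<Rightarrow> (nat \<Rightarrow> 'e set) \<Rightarrow> 'e
    \<Rightarrow> nat \<Rightarrow> nat \<Rightarrow> 'q vstate set" where
  "ver_init Sig \<delta>H q0 n So Sc \<sigma> N k =
     (if k < N then {(q0, \<lambda>_. q0, 0)}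
      else {(q, qs, 0) | q qs. \<exists>t \<in> lang \<delta>H q0. dstar \<delta>H q0 t = Some q \<and>
              (\<forall>i \<in> Ic n Sc \<sigma>. \<exists>si \<in> lang \<delta>H q0. dstar \<delta>H q0 si = Some (qs i) \<and>
                   proj (So i) si = proj (So i) t) \<and>
              (\<forall>i. i \<notin> Ic n Sc \<sigma> \<longrightarrow> qs i = q0)})"

text \<open>Supervisor i "moves with" event e (cases C1 or C3) resp. "moves alone" (C2 or C4).\<close>
definition case13 ::
  "'e set \<Rightarrow> ('q \<Rightarrow> 'e \<Rightarrow> 'q option) \<Rightarrow> (nat \<Rightarrow> 'e set) \<Rightarrow> (nat \<Rightarrow> nat) \<Rightarrow> 'e \<Rightarrow> nat
     \<Rightarrow> 'q vstate \<Rightarrow> 'e \<Rightarrow> nat \<Rightarrow> bool" where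
  "case13 Sig \<delta>H So No \<sigma> k x e i = (case x of (q, qs, d) \<Rightarrow>
     (k - d > No i \<and> e \<in> So i) \<or>
     (k - d \<le> No i \<and> \<sigma> \<notin> Gam_aug Sig \<delta>H (No i) (qs i) \<and> e \<in> So i))"

definition case24 ::
  "'e set \<Rightarrow> ('q \<Rightarrow> 'e \<Rightarrow> 'q option) \<Rightarrow> (nat \<Rightarrow> 'e set) \<Rightarrow> (nat \<Rightarrow> nat) \<Rightarrow> 'e \<Rightarrow> nat
     \<Rightarrow> 'q vstate \<Rightarrow> 'e \<Rightarrow> nat \<Rightarrow> bool" where
  "case24 Sig \<delta>H So No \<sigma> k x e i = (case x of (q, qs, d) \<Rightarrow>
     (k - d > No i \<and> e \<in> Sig - So i) \<or>
     (k - d \<le> No i \<and> \<sigma> \<notin> Gam_aug Sig \<delta>H (No i) (qs i) \<and> e \<in> Sig - So i))"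

definition ver_step ::
  "'e set \<Rightarrow> ('q \<Rightarrow> 'e \<Rightarrow> 'q option) \<Rightarrow> nat \<Rightarrow> (nat \<Rightarrow> 'e set) \<Rightarrow> (nat \<Rightarrow> 'e set) \<Rightarrow> (nat \<Rightarrow> nat)
     \<Rightarrow> 'e \<Rightarrow> nat \<Rightarrow> ('q vstate \<times> 'q vstate) set" where
  "ver_step Sig \<delta>H n So Sc No \<sigma> k =
     {((q, qs, d), (q', qs', d + 1)) | q qs d q' qs' e.
        e \<in> Sig \<and> d + 1 \<le> k \<and> \<delta>H q e = Some q' \<and>
        (\<forall>i \<in> Ic n Sc \<sigma>. case13 Sig \<delta>H So No \<sigma> k (q, qs, d) e i \<longrightarrow> \<delta>H (qs i) e \<noteq> None) \<and>
        qs' = (\<lambda>i. if i \<in> Ic n Sc \<sigma> \<and> case13 Sig \<delta>H So No \<sigma> k (q, qs, d) e i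
                   then the (\<delta>H (qs i) e) else qs i)}
   \<union> {((q, qs, d), (q, qs(i := p), d)) | q qs d e i p.
        e \<in> Sig \<and> i \<in> Ic n Sc \<sigma> \<and> case24 Sig \<delta>H So No \<sigma> k (q, qs, d) e i \<and> \<delta>H (qs i) e = Some p}"

definition ver_reach ::
  "'e set \<Rightarrow> ('q \<Rightarrow> 'e \<Rightarrow> 'q option) \<Rightarrow> 'q \<Rightarrow> nat \<Rightarrow> (nat \<Rightarrow> 'e set) \<Rightarrow> (nat \<Rightarrow> 'e set) \<Rightarrow> (nat \<Rightarrow> nat)
     \<Rightarrow> 'e \<Rightarrow> nat \<Rightarrow> nat \<Rightarrow> 'q vstate set" where
  "ver_reach Sig \<delta>H q0 n So Sc No \<sigma> N k =
     (ver_step Sig \<delta>H n So Sc No \<sigma> k)\<^sup>* `` ver_init Sig \<delta>H q0 n So Sc \<sigma> N k"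

end

theory Submission
  imports Defs
begin

lemma dstar_append: "dstar d q (a @ b) = (case dstar d q a of None \<Rightarrow> None | Some p \<Rightarrow> dstar d p b)"
  by (induction a arbitrary: q) (auto split: option.split)

lemma dstar_snoc: "dstar d q (a @ [e]) = (case dstar d q a of None \<Rightarrow> None | Some p \<Rightarrow> d p e)"
  by (simp add: dstar_append split: option.split)

lemma dstar_sub: "(\<forall>q e q'. dH q e = Some q' \<longrightarrow> d q e = Some q') \<Longrightarrow> dstar dH q s = Some p \<Longrightarrow> dstar d q s = Some p"
proof (induction s arbitrary: q)
  case (Cons a s)
  then obtain q' where "dH q a = Some q'" "dstar dH q' s = Some p" by (auto split: option.splits)
  with Cons show ?case by auto
qed simp

lemma dstar_Sig: "(\<forall>q e q'. dH q e = Some q' \<longrightarrow> e \<in> Sig) \<Longrightarrow> dstar dH q s = Some p \<Longrightarrow> set s \<subseteq> Sig"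
proof (induction s arbitrary: q)
  case (Cons a s)
  then obtain q' where "dH q a = Some q'" "dstar dH q' s = Some p" by (auto split: option.splits)
  moreover have "a \<in> Sig" using Cons.prems(1)[rule_format, OF \<open>dH q a = Some q'\<close>] .
  ultimately show ?case using Cons.IH[OF Cons.prems(1)] by simp
qed simp

lemma dstar_prefix: "dstar d q (a @ b) \<noteq> None \<Longrightarrow> dstar d q a \<noteq> None"
  by (auto simp: dstar_append split: option.splits)

lemma dstar_take: "dstar d q w \<noteq> None \<Longrightarrow> dstar d q (take j w) \<noteq> None"
  by (metis append_take_drop_id dstar_prefix)

lemma dstar_take_Suc: "j < length w \<Longrightarrow> dstar d q (take (Suc j) w) = (case dstar d q (take j w) of None \<Rightarrow> None | Some p \<Rightarrow> d p (w ! j))"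
  by (simp add: take_Suc_conv_app_nth dstar_snoc)

lemma proj_append[simp]: "proj A (xs @ ys) = proj A xs @ proj A ys"
  by (simp add: proj_def)

lemma proj_single[simp]: "proj A [e] = (if e \<in> A then [e] else [])"
  by (simp add: proj_def)

lemma proj_Nil[simp]: "proj A [] = []"
  by (simp add: proj_def)

lemma proj_Cons: "proj A (e # xs) = (if e \<in> A then e # proj A xs else proj A xs)"
  by (simp add: proj_def)

lemma Gam_augI: "dstar dH q s' = Some p \<Longrightarrow> \<sigma> \<in> Gam dH p \<Longrightarrow> s' \<in> lists Sig \<Longrightarrow> length s' \<le> M
   \<Longrightarrow> \<sigma> \<in> Gam_aug Sig dH M q"
  unfolding Gam_aug_def delta_aug_def by (auto simp: Gam_def)

lemma Gam_augE: "\<sigma> \<in> Gam_aug Sig dH M q \<Longrightarrow>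
   \<exists>s' p. s' \<in> lists Sig \<and> length s' \<le> M \<and> dstar dH q s' = Some p \<and> \<sigma> \<in> Gam dH p"
  unfolding Gam_aug_def delta_aug_def
  apply (cases "\<sigma> \<in> Gam dH q")
   apply (rule exI[of _ "[]"]; simp)
  apply (auto split: if_splits)
  done

lemma proj_prefix_take:
  "\<forall>p r. p @ r = proj A w \<longrightarrow> (\<exists>j \<le> length w. proj A (take j w) = p)"
proof (induction w)
  case Nil then show ?case by simp
next
  case (Cons x w)
  show ?case
  proof (intro allI impI)
    fix p r assume h: "p @ r = proj A (x # w)"
    show "\<exists>j\<le>length (x # w). proj A (take j (x # w)) = p"
    proof (cases p)
      case Nil then show ?thesis by (intro exI[of _ 0]) simp
    next
      case (Cons y p')
      show ?thesis
      proof (cases "x \<in> A")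
        case True
        with h Cons have "y = x" "p' @ r = proj A w" by (auto simp: proj_Cons)
        with Cons.IH obtain j where "j \<le> length w" "proj A (take j w) = p'" by blast
        then show ?thesis using True Cons \<open>y = x\<close> by (intro exI[of _ "Suc j"]) (simp add: proj_Cons)
      next
        case False
        with h have "p @ r = proj A w" by (simp add: proj_Cons)
        with Cons.IH obtain j where "j \<le> length w" "proj A (take j w) = p" by blast
        then show ?thesis using False by (intro exI[of _ "Suc j"]) (simp add: proj_Cons)
      qed
    qed
  qed
qed

locale vf =
  fixes Sig :: "'e set" and dH :: "'q \<Rightarrow> 'e \<Rightarrow> 'q option" and q0 :: 'q and n :: nat
    and So Sc :: "nat \<Rightarrow> 'e set" and No :: "nat \<Rightarrow> nat" and \<sigma> :: 'e and N k :: nat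
  assumes sigH: "\<forall>q e q'. dH q e = Some q' \<longrightarrow> e \<in> Sig"
begin

abbreviation "I \<equiv> Ic n Sc \<sigma>"
abbreviation "R \<equiv> ver_step Sig dH n So Sc No \<sigma> k"

definition frzp where "frzp i p d \<longleftrightarrow> k - d \<le> No i \<and> \<sigma> \<in> Gam_aug Sig dH (No i) p"

lemma c13_frz: "case13 Sig dH So No \<sigma> k (q,qs,d) e i \<Longrightarrow> \<not> frzp i (qs i) d \<and> e \<in> So i"
  unfolding case13_def frzp_def by auto
lemma c24_frz: "case24 Sig dH So No \<sigma> k (q,qs,d) e i \<Longrightarrow> \<not> frzp i (qs i) d \<and> e \<notin> So i"
  unfolding case24_def frzp_def by auto
lemma c13I: "\<not> frzp i (qs i) d \<Longrightarrow> e \<in> So i \<Longrightarrow> case13 Sig dH So No \<sigma> k (q,qs,d) e i"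
  unfolding case13_def frzp_def by auto
lemma c24I: "\<not> frzp i (qs i) d \<Longrightarrow> e \<in> Sig \<Longrightarrow> e \<notin> So i \<Longrightarrow> case24 Sig dH So No \<sigma> k (q,qs,d) e i"
  unfolding case24_def frzp_def by auto

definition Inv where "Inv x \<longleftrightarrow> (case x of (q,qs,d) \<Rightarrow> \<exists>T. dstar dH q0 T = Some q \<and> d \<le> length T \<and>
  (\<forall>i\<in>I. \<exists>w. dstar dH q0 w = Some (qs i) \<and> (proj (So i) w = proj (So i) T \<or>
     (\<exists>d'. d' \<le> d \<and> k - d' \<le> No i \<and> proj (So i) w = proj (So i) (take (length T - (d - d')) T) \<and> frzp i (qs i) d))))"

lemma Inv_init: "x \<in> ver_init Sig dH q0 n So Sc \<sigma> N k \<Longrightarrow> Inv x"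
proof (cases "k < N")
  case True
  assume "x \<in> ver_init Sig dH q0 n So Sc \<sigma> N k"
  with True have "x = (q0, \<lambda>_. q0, 0)" by (simp add: ver_init_def)
  then show ?thesis by (auto simp: Inv_def intro!: exI[of _ "[]"])
next
  case False
  assume "x \<in> ver_init Sig dH q0 n So Sc \<sigma> N k"
  with False obtain q qs t where x: "x = (q, qs, 0)" and t: "dstar dH q0 t = Some q"
    and si: "\<forall>i \<in> I. \<exists>si \<in> lang dH q0. dstar dH q0 si = Some (qs i) \<and> proj (So i) si = proj (So i) t"
    by (auto simp: ver_init_def)
  have h: "\<forall>i\<in>I. \<exists>w. dstar dH q0 w = Some (qs i) \<and> proj (So i) w = proj (So i) t" using si by blast
  show ?thesis unfolding Inv_def x prod.case apply (rule exI[of _ t]) using t h by auto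
qed

lemma Inv_step: assumes st: "(x, y) \<in> R" and inv: "Inv x" shows "Inv y"
proof -
  from st consider (J) q qs d q' e where "x = (q,qs,d)"
      "y = (q', \<lambda>i. if i\<in>I \<and> case13 Sig dH So No \<sigma> k (q,qs,d) e i then the (dH (qs i) e) else qs i, d+1)"
      "e \<in> Sig" "d+1 \<le> k" "dH q e = Some q'"
      "\<forall>i\<in>I. case13 Sig dH So No \<sigma> k (q,qs,d) e i \<longrightarrow> dH (qs i) e \<noteq> None"
    | (A) q qs d e i p where "x = (q,qs,d)" "y = (q, qs(i:=p), d)" "e\<in>Sig" "i\<in>I"
      "case24 Sig dH So No \<sigma> k (q,qs,d) e i" "dH (qs i) e = Some p"
    unfolding ver_step_def by blast
  then show ?thesis
  proof cases
    case J
    from inv obtain T where T: "dstar dH q0 T = Some q" "d \<le> length T" and W: "\<forall>i\<in>I. \<exists>w. dstar dH q0 w = Some (qs i) \<and> (proj (So i) w = proj (So i) T \<or>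
     (\<exists>d'. d' \<le> d \<and> k - d' \<le> No i \<and> proj (So i) w = proj (So i) (take (length T - (d - d')) T) \<and> frzp i (qs i) d))"
      unfolding Inv_def J(1) by auto
    define qs' where "qs' = (\<lambda>i. if i\<in>I \<and> case13 Sig dH So No \<sigma> k (q,qs,d) e i then the (dH (qs i) e) else qs i)"
    have T': "dstar dH q0 (T@[e]) = Some q'" by (simp add: dstar_snoc T J)
    have "\<forall>i\<in>I. \<exists>w. dstar dH q0 w = Some (qs' i) \<and> (proj (So i) w = proj (So i) (T@[e]) \<or>
     (\<exists>d'. d' \<le> d+1 \<and> k - d' \<le> No i \<and> proj (So i) w = proj (So i) (take (length (T@[e]) - (d + 1 - d')) (T@[e])) \<and> frzp i (qs' i) (d+1)))"
    proof
      fix i assume i: "i \<in> I"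
      from W i obtain w where w: "dstar dH q0 w = Some (qs i)" and disj: "proj (So i) w = proj (So i) T \<or>
     (\<exists>d'. d' \<le> d \<and> k - d' \<le> No i \<and> proj (So i) w = proj (So i) (take (length T - (d - d')) T) \<and> frzp i (qs i) d)"
        by blast
      show "\<exists>w. dstar dH q0 w = Some (qs' i) \<and> (proj (So i) w = proj (So i) (T@[e]) \<or>
     (\<exists>d'. d' \<le> d+1 \<and> k - d' \<le> No i \<and> proj (So i) w = proj (So i) (take (length (T@[e]) - (d + 1 - d')) (T@[e])) \<and> frzp i (qs' i) (d+1)))"
      proof (cases "frzp i (qs i) d")
        case True
        then have "\<not> case13 Sig dH So No \<sigma> k (q,qs,d) e i" using c13_frz by blast
        then have eq: "qs' i = qs i" by (simp add: qs'_def)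
        have fr: "frzp i (qs' i) (d+1)" using True eq by (auto simp: frzp_def)
        from disj show ?thesis
        proof
          assume h: "proj (So i) w = proj (So i) T"
          have "take (length (T@[e]) - (d + 1 - d)) (T@[e]) = T" by simp
          then show ?thesis using h w eq fr True by (intro exI[of _ w]) (auto simp: frzp_def intro!: exI[of _ d])
        next
          assume "\<exists>d'. d' \<le> d \<and> k - d' \<le> No i \<and> proj (So i) w = proj (So i) (take (length T - (d - d')) T) \<and> frzp i (qs i) d"
          then obtain d' where d': "d' \<le> d" "k - d' \<le> No i" "proj (So i) w = proj (So i) (take (length T - (d - d')) T)" by blast
          have "take (length (T@[e]) - (d + 1 - d')) (T@[e]) = take (length T - (d - d')) T"
            using d'(1) T(2) by (simp add: Suc_diff_le)
          then show ?thesis using d' w eq fr by (intro exI[of _ w]) (auto intro!: exI[of _ d'])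
        qed
      next
        case False
        with disj have h: "proj (So i) w = proj (So i) T" by blast
        show ?thesis
        proof (cases "e \<in> So i")
          case True
          then have c: "case13 Sig dH So No \<sigma> k (q,qs,d) e i" using c13I False by blast
          with J(6) i obtain p where p: "dH (qs i) e = Some p" by blast
          have "qs' i = p" using c i p by (simp add: qs'_def)
          then show ?thesis using p w h True by (intro exI[of _ "w@[e]"]) (simp add: dstar_snoc)
        next
          case False
          then have "\<not> case13 Sig dH So No \<sigma> k (q,qs,d) e i" using c13_frz by blast
          then have eq: "qs' i = qs i" by (simp add: qs'_def)
          then show ?thesis using w h False by (intro exI[of _ w]) simp
        qed
      qed
    qed
    then show ?thesis unfolding Inv_def J(2) qs'_def[symmetric] using T' T(2)
      by (intro case_prodI exI[of _ "T@[e]"]) simp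
  next
    case A
    from inv obtain T where T: "dstar dH q0 T = Some q" "d \<le> length T" and W: "\<forall>i\<in>I. \<exists>w. dstar dH q0 w = Some (qs i) \<and> (proj (So i) w = proj (So i) T \<or>
     (\<exists>d'. d' \<le> d \<and> k - d' \<le> No i \<and> proj (So i) w = proj (So i) (take (length T - (d - d')) T) \<and> frzp i (qs i) d))"
      unfolding Inv_def A(1) by auto
    have nf: "\<not> frzp i (qs i) d" "e \<notin> So i" using c24_frz A(5) by blast+
    from W A(4) obtain w where w: "dstar dH q0 w = Some (qs i)" and h: "proj (So i) w = proj (So i) T"
      using nf by blast
    have "dstar dH q0 (w@[e]) = Some p" using w A(6) by (simp add: dstar_snoc)
    then have "\<exists>w. dstar dH q0 w = Some ((qs(i:=p)) i) \<and> proj (So i) w = proj (So i) T"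
      using h nf by (intro exI[of _ "w@[e]"]) simp
    then show ?thesis unfolding Inv_def A(2) using T W
      by (intro case_prodI exI[of _ T]) (auto simp: frzp_def)
  qed
qed

lemma Inv_reach: "x \<in> ver_reach Sig dH q0 n So Sc No \<sigma> N k \<Longrightarrow> Inv x"
proof -
  assume "x \<in> ver_reach Sig dH q0 n So Sc No \<sigma> N k"
  then obtain y where y: "y \<in> ver_init Sig dH q0 n So Sc \<sigma> N k" "(y, x) \<in> R\<^sup>*"
    unfolding ver_reach_def by blast
  from y(2) show ?thesis
  proof (induction rule: rtrancl_induct)
    case base then show ?case using Inv_init y(1) by blast
  next
    case (step a b) then show ?case using Inv_step by blast
  qed
qed

lemma sound_dir:
  assumes coobs: "delay_coobservable (lang dH q0) (lang d q0) n So Sc No \<sigma>"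
    and sub: "\<forall>q e q'. dH q e = Some q' \<longrightarrow> d q e = Some q'"
    and reach: "(q,qs,k) \<in> ver_reach Sig dH q0 n So Sc No \<sigma> N k"
    and bad: "\<sigma> \<in> Gam d q - Gam dH q"
    and aug: "\<forall>i\<in>I. \<sigma> \<in> Gam_aug Sig dH (No i) (qs i)"
  shows False
proof -
  from Inv_reach[OF reach] obtain T where T: "dstar dH q0 T = Some q" "k \<le> length T" and W: "\<forall>i\<in>I. \<exists>w. dstar dH q0 w = Some (qs i) \<and> (proj (So i) w = proj (So i) T \<or>
     (\<exists>d'. d' \<le> k \<and> k - d' \<le> No i \<and> proj (So i) w = proj (So i) (take (length T - (k - d')) T) \<and> frzp i (qs i) k))"
    unfolding Inv_def by auto
  have TH: "T \<in> lang dH q0" using T by (simp add: lang_def)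
  have "dstar d q0 T = Some q" using dstar_sub[OF sub T(1)] .
  then have TG: "T @ [\<sigma>] \<in> lang d q0" using bad by (auto simp: lang_def dstar_snoc Gam_def)
  have TnH: "T @ [\<sigma>] \<notin> lang dH q0" using bad T(1) by (auto simp: lang_def dstar_snoc Gam_def)
  from coobs TH TG TnH obtain i where i: "i \<in> I" and emp:
    "{u @ [\<sigma>] | u. u \<in> Theta_inv_set (lang d q0) (So i) (No i) (Theta (So i) (No i) T)} \<inter> lang dH q0 = {}"
    unfolding delay_coobservable_def by blast
  from W i obtain w where w: "dstar dH q0 w = Some (qs i)" and disj: "proj (So i) w = proj (So i) T \<or>
     (\<exists>d'. d' \<le> k \<and> k - d' \<le> No i \<and> proj (So i) w = proj (So i) (take (length T - (k - d')) T) \<and> frzp i (qs i) k)"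
    by blast
  from Gam_augE[OF aug[rule_format, OF i]] obtain s' p where sp: "s' \<in> lists Sig" "length s' \<le> No i"
    "dstar dH (qs i) s' = Some p" "\<sigma> \<in> Gam dH p" by blast
  define u where "u = w @ s'"
  have du: "dstar dH q0 u = Some p" using w sp(3) by (simp add: u_def dstar_append)
  then have uH: "u @ [\<sigma>] \<in> lang dH q0" using sp(4) by (auto simp: lang_def dstar_snoc Gam_def)
  have uG: "u \<in> lang d q0" using dstar_sub[OF sub du] by (simp add: lang_def)
  have "proj (So i) w \<in> Theta (So i) (No i) T"
    using disj
  proof
    assume "proj (So i) w = proj (So i) T"
    then show ?thesis unfolding Theta_def trunc_def by (intro CollectI exI[of _ 0]) simp
  next
    assume "\<exists>d'. d' \<le> k \<and> k - d' \<le> No i \<and> proj (So i) w = proj (So i) (take (length T - (k - d')) T) \<and> frzp i (qs i) k"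
    then obtain d' where "k - d' \<le> No i" "proj (So i) w = proj (So i) (take (length T - (k - d')) T)" by blast
    then show ?thesis unfolding Theta_def trunc_def by (intro CollectI exI[of _ "k - d'"]) simp
  qed
  moreover have "proj (So i) w \<in> Theta (So i) (No i) u"
    unfolding Theta_def trunc_def using sp(2) by (intro CollectI exI[of _ "length s'"]) (simp add: u_def)
  ultimately have "u \<in> Theta_inv_set (lang d q0) (So i) (No i) (Theta (So i) (No i) T)"
    unfolding Theta_inv_set_def Theta_inv_def using uG by blast
  then show False using emp uH by blast
qed

abbreviation "Reach \<equiv> ver_reach Sig dH q0 n So Sc No \<sigma> N k"

lemma reach_trans: "x \<in> Reach \<Longrightarrow> (x, y) \<in> R\<^sup>* \<Longrightarrow> y \<in> Reach"
  unfolding ver_reach_def by (meson ImageE ImageI rtrancl_trans)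

lemma init_reach: "x \<in> ver_init Sig dH q0 n So Sc \<sigma> N k \<Longrightarrow> x \<in> Reach"
  unfolding ver_reach_def by blast

lemma alone:
  assumes "i \<in> I" "dstar dH q0 ws \<noteq> None"
  shows "dstar dH q0 (take j ws) = Some (qs i) \<Longrightarrow> j + r \<le> length ws \<Longrightarrow>
    (\<forall>l. j \<le> l \<and> l < j + r \<longrightarrow> ws ! l \<notin> So i) \<Longrightarrow>
    \<exists>qs'. ((q,qs,d),(q,qs',d)) \<in> R\<^sup>* \<and> (\<forall>i'. i' \<noteq> i \<longrightarrow> qs' i' = qs i') \<and>
      (dstar dH q0 (take (j+r) ws) = Some (qs' i) \<or> frzp i (qs' i) d)"
proof (induction r arbitrary: j qs)
  case 0
  then show ?case by (intro exI[of _ qs]) auto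
next
  case (Suc r)
  show ?case
  proof (cases "frzp i (qs i) d")
    case True
    then show ?thesis by (intro exI[of _ qs]) auto
  next
    case False
    have jl: "j < length ws" using Suc.prems(2) by simp
    define e where "e = ws ! j"
    have "dstar dH q0 (take (Suc j) ws) \<noteq> None" by (rule dstar_take[OF assms(2)])
    then obtain p where p: "dstar dH q0 (take (Suc j) ws) = Some p" by blast
    then have dp: "dH (qs i) e = Some p" using dstar_take_Suc[OF jl, of dH q0] Suc.prems(1) by (simp add: e_def)
    then have eS: "e \<in> Sig" using sigH by blast
    have eo: "e \<notin> So i" using Suc.prems(3) e_def by auto
    have c: "case24 Sig dH So No \<sigma> k (q,qs,d) e i" using c24I False eS eo by blast
    have st: "((q,qs,d),(q,qs(i:=p),d)) \<in> R"
      unfolding ver_step_def using eS assms(1) c dp by blast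
    have "dstar dH q0 (take (Suc j) ws) = Some ((qs(i:=p)) i)" using p by simp
    moreover have "Suc j + r \<le> length ws" using Suc.prems(2) by simp
    moreover have "\<forall>l. Suc j \<le> l \<and> l < Suc j + r \<longrightarrow> ws ! l \<notin> So i" using Suc.prems(3) by auto
    ultimately obtain qs' where qs': "((q,qs(i:=p),d),(q,qs',d)) \<in> R\<^sup>*" "\<forall>i'. i' \<noteq> i \<longrightarrow> qs' i' = (qs(i:=p)) i'"
      "dstar dH q0 (take (Suc j + r) ws) = Some (qs' i) \<or> frzp i (qs' i) d"
      using Suc.IH by blast
    show ?thesis using st qs' by (intro exI[of _ qs']) (auto intro: converse_rtrancl_into_rtrancl)
  qed
qed

end

lemma proj_takeWhile: "proj A (takeWhile (\<lambda>e. e \<notin> A) xs) = []"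
  by (induction xs) (auto simp: proj_Cons)

lemma take_add_drop: "take (j + r) ws = take j ws @ take r (drop j ws)"
  by (simp add: take_add)

lemma take_length_takeWhile: "take (length (takeWhile P xs)) xs = takeWhile P xs"
  by (induction xs) auto

locale vf2 = vf +
  fixes S and w and m
  assumes SH: "dstar dH q0 S \<noteq> None"
    and wH: "\<forall>i\<in>I. dstar dH q0 (w i) \<noteq> None"
    and wproj: "\<forall>i\<in>I. proj (So i) (w i) = proj (So i) (take (length S - m i) S)"
    and maug: "\<forall>i\<in>I. \<sigma> \<in> Gam_aug Sig dH (No i) (the (dstar dH q0 (w i)))"
    and mle: "\<forall>i\<in>I. m i \<le> No i"
    and NoN: "\<forall>i\<in>I. No i \<le> N"
    and kdef: "k = min (length S) N"
begin

abbreviation "Td d \<equiv> take (length S - k + d) S"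

definition modeA where "modeA i p d \<longleftrightarrow> (\<exists>j \<le> length (w i). dstar dH q0 (take j (w i)) = Some p \<and>
   proj (So i) (take j (w i)) = proj (So i) (Td d) \<and> length S - k + d \<le> length S - m i)"

definition modeA' where "modeA' i p d \<longleftrightarrow> (\<exists>j \<le> length (w i). dstar dH q0 (take j (w i)) = Some p \<and>
   proj (So i) (take j (w i)) = proj (So i) (Td d) \<and> length S - k + d < length S - m i \<and>
   (j = length (w i) \<or> w i ! j \<in> So i))"

lemma A'A: "modeA' i p d \<Longrightarrow> modeA i p d"
  unfolding modeA_def modeA'_def by fastforce

lemma prep:
  assumes i: "i \<in> I" and dk: "d \<le> k" and A: "modeA i (qs i) d"
  shows "\<exists>qs'. ((q,qs,d),(q,qs',d)) \<in> R\<^sup>* \<and> (\<forall>i'. i' \<noteq> i \<longrightarrow> qs' i' = qs i') \<and>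
    (modeA' i (qs' i) d \<or> frzp i (qs' i) d)"
proof -
  define ws where "ws = w i"
  from A obtain j where j: "j \<le> length ws" "dstar dH q0 (take j ws) = Some (qs i)"
    "proj (So i) (take j ws) = proj (So i) (Td d)" "length S - k + d \<le> length S - m i"
    unfolding modeA_def ws_def by blast
  define r where "r = length (takeWhile (\<lambda>e. e \<notin> So i) (drop j ws))"
  have jr: "j + r \<le> length ws" unfolding r_def using j(1)
    by (metis add_le_cancel_left le_add_diff_inverse length_drop length_takeWhile_le)
  have unobs: "\<forall>l. j \<le> l \<and> l < j + r \<longrightarrow> ws ! l \<notin> So i"
  proof (intro allI impI)
    fix l assume l: "j \<le> l \<and> l < j + r"
    then have "l - j < r" by arith
    then have "takeWhile (\<lambda>e. e \<notin> So i) (drop j ws) ! (l - j) = drop j ws ! (l - j)"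
      unfolding r_def by (rule takeWhile_nth)
    moreover have "takeWhile (\<lambda>e. e \<notin> So i) (drop j ws) ! (l - j) \<in> set (takeWhile (\<lambda>e. e \<notin> So i) (drop j ws))"
      using \<open>l - j < r\<close> unfolding r_def by (rule nth_mem)
    moreover have "drop j ws ! (l - j) = ws ! l" using l j(1) by simp
    ultimately show "ws ! l \<notin> So i" by (metis (mono_tags, lifting) set_takeWhileD)
  qed
  have wsH: "dstar dH q0 ws \<noteq> None" using wH i ws_def by blast
  from alone[of i ws j qs, OF i wsH j(2) jr unobs] obtain qs' where qs': "((q,qs,d),(q,qs',d)) \<in> R\<^sup>*"
    "\<forall>i'. i' \<noteq> i \<longrightarrow> qs' i' = qs i'" "dstar dH q0 (take (j+r) ws) = Some (qs' i) \<or> frzp i (qs' i) d"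
    by blast
  show ?thesis
  proof (cases "frzp i (qs' i) d")
    case True then show ?thesis using qs' by blast
  next
    case False
    with qs' have d2: "dstar dH q0 (take (j+r) ws) = Some (qs' i)" by blast
    have pj: "proj (So i) (take (j+r) ws) = proj (So i) (Td d)"
      using j(3) unfolding take_add_drop r_def take_length_takeWhile by (simp add: proj_takeWhile)
    have nxt: "j + r = length ws \<or> ws ! (j + r) \<in> So i"
    proof (cases "j + r < length ws")
      case True
      then have "r < length (drop j ws)" by simp
      from nth_length_takeWhile[OF this[unfolded r_def]] have "drop j ws ! r \<in> So i" unfolding r_def by simp
      then show ?thesis using j(1) by simp
    next
      case False then show ?thesis using jr by simp
    qed
    show ?thesis
    proof (cases "length S - k + d < length S - m i")
      case True
      then have "modeA' i (qs' i) d" unfolding modeA'_def using jr d2 pj nxt ws_def by blast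
      then show ?thesis using qs' by blast
    next
      case False
      with j(4) have eq: "length S - k + d = length S - m i" by simp
      have pw: "proj (So i) ws = proj (So i) (take (j+r) ws)" using pj eq wproj i ws_def by simp
      have full: "j + r = length ws"
      proof (rule ccontr)
        assume "j + r \<noteq> length ws"
        with nxt jr have lt: "j + r < length ws" and o: "ws ! (j+r) \<in> So i" by auto
        have "ws = take (j+r) ws @ ws ! (j+r) # drop (Suc (j+r)) ws"
          using lt by (simp add: Cons_nth_drop_Suc)
        then have "proj (So i) ws = proj (So i) (take (j+r) ws) @ ws ! (j+r) # proj (So i) (drop (Suc (j+r)) ws)"
          using o by (metis proj_Cons proj_append)
        then show False using pw by simp
      qed
      then have "qs' i = the (dstar dH q0 (w i))" using d2 ws_def by simp
      then have ga: "\<sigma> \<in> Gam_aug Sig dH (No i) (qs' i)" using maug i by simp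
      have "k \<le> length S" using kdef by simp
      then have "k - d \<le> No i" using eq dk mle i by fastforce
      then have "frzp i (qs' i) d" using ga by (simp add: frzp_def)
      then show ?thesis using qs' by blast
    qed
  qed
qed

lemma I_finite: "finite I"
  unfolding Ic_def by simp

lemma prep_all:
  assumes "finite J"
  shows "J \<subseteq> I \<Longrightarrow> d \<le> k \<Longrightarrow> \<forall>i\<in>I. modeA i (qs i) d \<or> frzp i (qs i) d \<Longrightarrow>
    \<exists>qs'. ((q,qs,d),(q,qs',d)) \<in> R\<^sup>* \<and> (\<forall>i\<in>I. modeA i (qs' i) d \<or> frzp i (qs' i) d) \<and>
      (\<forall>i\<in>J. modeA' i (qs' i) d \<or> frzp i (qs' i) d)"
  using assms
proof (induction J arbitrary: qs rule: finite_induct)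
  case empty
  then show ?case by (intro exI[of _ qs]) auto
next
  case (insert a J)
  then obtain qs1 where qs1: "((q,qs,d),(q,qs1,d)) \<in> R\<^sup>*" "\<forall>i\<in>I. modeA i (qs1 i) d \<or> frzp i (qs1 i) d"
    "\<forall>i\<in>J. modeA' i (qs1 i) d \<or> frzp i (qs1 i) d" by blast
  have aI: "a \<in> I" using insert by blast
  show ?case
  proof (cases "frzp a (qs1 a) d")
    case True
    then show ?thesis using qs1 by (intro exI[of _ qs1]) auto
  next
    case False
    then have "modeA a (qs1 a) d" using qs1(2) aI by blast
    from prep[of a d qs1 q, OF aI insert.prems(2) this] obtain qs2 where qs2: "((q,qs1,d),(q,qs2,d)) \<in> R\<^sup>*"
      "\<forall>i'. i' \<noteq> a \<longrightarrow> qs2 i' = qs1 i'" "modeA' a (qs2 a) d \<or> frzp a (qs2 a) d" by blast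
    have "\<forall>i\<in>I. modeA i (qs2 i) d \<or> frzp i (qs2 i) d"
      using qs1(2) qs2(2,3) A'A by metis
    moreover have "\<forall>i\<in>insert a J. modeA' i (qs2 i) d \<or> frzp i (qs2 i) d"
      using qs1(3) qs2(2,3) by (metis insertE)
    moreover have "((q,qs,d),(q,qs2,d)) \<in> R\<^sup>*" using qs1(1) qs2(1) by simp
    ultimately show ?thesis by blast
  qed
qed

lemma obs_next:
  assumes i: "i \<in> I" and d: "d < k" and j: "j \<le> length (w i)"
    "proj (So i) (take j (w i)) = proj (So i) (Td d)" "length S - k + d < length S - m i"
    "j = length (w i) \<or> w i ! j \<in> So i"
    and e: "S ! (length S - k + d) \<in> So i"
  shows "j < length (w i) \<and> w i ! j = S ! (length S - k + d)"
proof -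
  define a where "a = length S - k + d"
  define e where "e = S ! a"
  define M where "M = length S - m i"
  define ws where "ws = w i"
  have kS: "k \<le> length S" using kdef by simp
  have aS: "a < length S" using d kS a_def by arith
  have "take M S = take (Suc a) (take M S) @ drop (Suc a) (take M S)" by (rule append_take_drop_id[symmetric])
  moreover have "take (Suc a) (take M S) = take (Suc a) S" using j(3) a_def M_def by (simp add: min_def)
  moreover have "take (Suc a) S = take a S @ [e]" using aS e_def by (simp add: take_Suc_conv_app_nth)
  ultimately have tm: "take M S = take a S @ e # drop (Suc a) (take M S)" by simp
  have "e \<in> So i" using e e_def a_def by simp
  then have "proj (So i) (take a S @ e # drop (Suc a) (take M S)) = proj (So i) (take a S) @ e # proj (So i) (drop (Suc a) (take M S))"
    by (simp add: proj_Cons)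
  then have "proj (So i) (take M S) = proj (So i) (take a S) @ e # proj (So i) (drop (Suc a) (take M S))"
    using arg_cong[where f="proj (So i)", OF tm] by simp
  then have "proj (So i) ws = proj (So i) (take a S) @ e # proj (So i) (drop (Suc a) (take M S))"
    using wproj i ws_def M_def by simp
  moreover have "proj (So i) ws = proj (So i) (take j ws) @ proj (So i) (drop j ws)"
    by (metis append_take_drop_id proj_append)
  ultimately have pd: "proj (So i) (drop j ws) = e # proj (So i) (drop (Suc a) (take M S))"
    using j(2) ws_def a_def by simp
  then have "drop j ws \<noteq> []" by auto
  then have jl: "j < length ws" by simp
  then have "drop j ws = ws ! j # drop (Suc j) ws" by (simp add: Cons_nth_drop_Suc)
  moreover have "ws ! j \<in> So i" using j(4) jl ws_def by auto
  ultimately have "proj (So i) (drop j ws) = ws ! j # proj (So i) (drop (Suc j) ws)" by (simp add: proj_Cons)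
  with pd have "ws ! j = e" by simp
  then show ?thesis using jl ws_def e_def a_def by simp
qed

lemma joint:
  assumes d: "d < k" and q: "dstar dH q0 (Td d) = Some q"
    and M: "\<forall>i\<in>I. modeA' i (qs i) d \<or> frzp i (qs i) d"
  shows "\<exists>q' qs'. ((q,qs,d),(q',qs',d+1)) \<in> R \<and> dstar dH q0 (Td (d+1)) = Some q' \<and>
    (\<forall>i\<in>I. modeA i (qs' i) (d+1) \<or> frzp i (qs' i) (d+1))"
proof -
  define a where "a = length S - k + d"
  define e where "e = S ! a"
  have kS: "k \<le> length S" using kdef by simp
  have aS: "a < length S" using d kS a_def by arith
  have Td1: "Td (d+1) = take (Suc a) S" using a_def by simp
  have "dstar dH q0 (take (Suc a) S) \<noteq> None" by (rule dstar_take[OF SH])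
  then obtain q' where q': "dstar dH q0 (take (Suc a) S) = Some q'" by blast
  then have dq: "dH q e = Some q'" using dstar_take_Suc[OF aS, of dH q0] q a_def e_def by simp
  then have eS: "e \<in> Sig" using sigH by blast
  define qs' where "qs' = (\<lambda>i. if i\<in>I \<and> case13 Sig dH So No \<sigma> k (q,qs,d) e i then the (dH (qs i) e) else qs i)"
  have key: "\<forall>i\<in>I. \<not> frzp i (qs i) d \<longrightarrow> e \<in> So i \<longrightarrow>
      (\<exists>j. dstar dH q0 (take j (w i)) = Some (qs i) \<and> proj (So i) (take j (w i)) = proj (So i) (Td d) \<and>
         length S - k + d < length S - m i \<and> j < length (w i) \<and> w i ! j = e)"
  proof (intro ballI impI)
    fix i assume i: "i \<in> I" and nf: "\<not> frzp i (qs i) d" and eo: "e \<in> So i"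
    from M i nf obtain j where j: "j \<le> length (w i)" "dstar dH q0 (take j (w i)) = Some (qs i)"
      "proj (So i) (take j (w i)) = proj (So i) (Td d)" "length S - k + d < length S - m i"
      "j = length (w i) \<or> w i ! j \<in> So i" unfolding modeA'_def by blast
    have "j < length (w i) \<and> w i ! j = S ! (length S - k + d)"
      using obs_next[OF i d j(1) j(3) j(4) j(5)] eo e_def a_def by simp
    then show "\<exists>j. dstar dH q0 (take j (w i)) = Some (qs i) \<and> proj (So i) (take j (w i)) = proj (So i) (Td d) \<and>
         length S - k + d < length S - m i \<and> j < length (w i) \<and> w i ! j = e"
      using j e_def a_def by blast
  qed
  have en: "\<forall>i\<in>I. case13 Sig dH So No \<sigma> k (q,qs,d) e i \<longrightarrow> dH (qs i) e \<noteq> None"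
  proof (intro ballI impI)
    fix i assume i: "i \<in> I" and c: "case13 Sig dH So No \<sigma> k (q,qs,d) e i"
    then have nf: "\<not> frzp i (qs i) d" and eo: "e \<in> So i" using c13_frz by blast+
    from key i nf eo obtain j where j: "dstar dH q0 (take j (w i)) = Some (qs i)" "j < length (w i)" "w i ! j = e"
      by blast
    have "dstar dH q0 (take (Suc j) (w i)) \<noteq> None" using wH i by (intro dstar_take) blast
    then show "dH (qs i) e \<noteq> None" using dstar_take_Suc[OF j(2), of dH q0] j by simp
  qed
  have st: "((q,qs,d),(q',qs',d+1)) \<in> R"
    unfolding ver_step_def qs'_def
    apply (rule UnI1)
    apply (rule CollectI)
    apply (rule exI[of _ q], rule exI[of _ qs], rule exI[of _ d], rule exI[of _ q'], rule exI, rule exI[of _ e])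
    using eS d dq en by simp
  have modes: "\<forall>i\<in>I. modeA i (qs' i) (d+1) \<or> frzp i (qs' i) (d+1)"
  proof
    fix i assume i: "i \<in> I"
    show "modeA i (qs' i) (d+1) \<or> frzp i (qs' i) (d+1)"
    proof (cases "frzp i (qs i) d")
      case True
      then have "\<not> case13 Sig dH So No \<sigma> k (q,qs,d) e i" using c13_frz by blast
      then have "qs' i = qs i" by (simp add: qs'_def)
      then show ?thesis using True by (auto simp: frzp_def)
    next
      case False
      show ?thesis
      proof (cases "e \<in> So i")
        case True
        then have c: "case13 Sig dH So No \<sigma> k (q,qs,d) e i" using c13I False by blast
        from key i False True obtain j where j: "dstar dH q0 (take j (w i)) = Some (qs i)"
          "proj (So i) (take j (w i)) = proj (So i) (Td d)" "length S - k + d < length S - m i"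
          "j < length (w i)" "w i ! j = e" by blast
        have "dstar dH q0 (take (Suc j) (w i)) \<noteq> None" using wH i by (intro dstar_take) blast
        then obtain p where p: "dstar dH q0 (take (Suc j) (w i)) = Some p" by blast
        then have "dH (qs i) e = Some p" using dstar_take_Suc[OF j(4), of dH q0] j by simp
        then have qsp: "qs' i = p" using c i by (simp add: qs'_def)
        have "take (Suc j) (w i) = take j (w i) @ [e]" using j(4,5) by (simp add: take_Suc_conv_app_nth)
        moreover have "Td (d+1) = Td d @ [e]" using Td1 aS e_def a_def by (simp add: take_Suc_conv_app_nth)
        ultimately have "proj (So i) (take (Suc j) (w i)) = proj (So i) (Td (d+1))" using j(2) by simp
        then have "modeA i (qs' i) (d+1)" unfolding modeA_def using p qsp j(3,4)
          by (intro exI[of _ "Suc j"]) auto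
        then show ?thesis by blast
      next
        case eo: False
        then have "\<not> case13 Sig dH So No \<sigma> k (q,qs,d) e i" using c13_frz by blast
        then have qe: "qs' i = qs i" by (simp add: qs'_def)
        from M i False obtain j where j: "j \<le> length (w i)" "dstar dH q0 (take j (w i)) = Some (qs i)"
          "proj (So i) (take j (w i)) = proj (So i) (Td d)" "length S - k + d < length S - m i"
          unfolding modeA'_def by blast
        have "Td (d+1) = Td d @ [e]" using Td1 aS e_def a_def by (simp add: take_Suc_conv_app_nth)
        then have "proj (So i) (take j (w i)) = proj (So i) (Td (d+1))" using j(3) eo by simp
        then have "modeA i (qs' i) (d+1)" unfolding modeA_def using j qe
          by (intro exI[of _ j]) auto
        then show ?thesis by blast
      qed
    qed
  qed
  show ?thesis using st q' Td1 modes by (intro exI[of _ q'] exI[of _ qs']) simp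
qed

lemma loop: "d \<le> k \<Longrightarrow> \<exists>q qs. (q,qs,d) \<in> Reach \<and> dstar dH q0 (Td d) = Some q \<and>
   (\<forall>i\<in>I. modeA i (qs i) d \<or> frzp i (qs i) d)"
proof (induction d)
  case 0
  show ?case
  proof (cases "k < N")
    case True
    then have kS: "k = length S" using kdef by simp
    have "(q0, \<lambda>_. q0, 0) \<in> Reach" using True by (intro init_reach) (simp add: ver_init_def)
    moreover have "\<forall>i\<in>I. modeA i q0 0" unfolding modeA_def using kS by (intro ballI exI[of _ 0]) simp
    ultimately show ?thesis using kS by (intro exI[of _ q0] exI[of _ "\<lambda>_. q0"]) simp
  next
    case False
    then have kN: "k = N" "N \<le> length S" using kdef by auto
    have ex: "\<forall>i\<in>I. \<exists>j. j \<le> length (w i) \<and> proj (So i) (take j (w i)) = proj (So i) (Td 0)"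
    proof
      fix i assume i: "i \<in> I"
      have le: "length S - k \<le> length S - m i" using mle NoN i kN by fastforce
      have "take (length S - m i) S = take (length S - k) (take (length S - m i) S) @ drop (length S - k) (take (length S - m i) S)"
        by (rule append_take_drop_id[symmetric])
      moreover have "take (length S - k) (take (length S - m i) S) = take (length S - k) S"
        using le by (simp add: min_def)
      ultimately have "proj (So i) (Td 0) @ proj (So i) (drop (length S - k) (take (length S - m i) S)) = proj (So i) (w i)"
        using wproj i by (metis add_0_right proj_append)
      then show "\<exists>j. j \<le> length (w i) \<and> proj (So i) (take j (w i)) = proj (So i) (Td 0)"
        using proj_prefix_take by blast
    qed
    then obtain jf where jf: "\<forall>i\<in>I. jf i \<le> length (w i) \<and> proj (So i) (take (jf i) (w i)) = proj (So i) (Td 0)"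
      by metis
    define qs where "qs = (\<lambda>i. if i \<in> I then the (dstar dH q0 (take (jf i) (w i))) else q0)"
    have dq: "\<forall>i\<in>I. dstar dH q0 (take (jf i) (w i)) = Some (qs i)"
      unfolding qs_def using wH dstar_take by fastforce
    have "dstar dH q0 (Td 0) \<noteq> None" by (rule dstar_take[OF SH])
    then obtain q where q: "dstar dH q0 (Td 0) = Some q" by blast
    have "(q, qs, 0) \<in> ver_init Sig dH q0 n So Sc \<sigma> N k"
    proof -
      have "\<forall>i \<in> I. \<exists>si \<in> lang dH q0. dstar dH q0 si = Some (qs i) \<and> proj (So i) si = proj (So i) (Td 0)"
        using dq jf by (auto simp: lang_def)
      moreover have "Td 0 \<in> lang dH q0" using q by (simp add: lang_def)
      moreover have "\<forall>i. i \<notin> I \<longrightarrow> qs i = q0" by (simp add: qs_def)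
      ultimately show ?thesis using False q unfolding ver_init_def by auto
    qed
    then have "(q, qs, 0) \<in> Reach" by (rule init_reach)
    moreover have "\<forall>i\<in>I. modeA i (qs i) 0"
    proof
      fix i assume i: "i \<in> I"
      have "length S - k \<le> length S - m i" using mle NoN i kN by fastforce
      then show "modeA i (qs i) 0" unfolding modeA_def using jf dq i by (intro exI[of _ "jf i"]) auto
    qed
    ultimately show ?thesis using q by blast
  qed
next
  case (Suc d)
  then have dk: "d < k" by simp
  from Suc obtain q qs where h: "(q,qs,d) \<in> Reach" "dstar dH q0 (Td d) = Some q"
    "\<forall>i\<in>I. modeA i (qs i) d \<or> frzp i (qs i) d" by auto
  from prep_all[OF I_finite order_refl, of d qs q] dk h(3) obtain qs1 where
    qs1: "((q,qs,d),(q,qs1,d)) \<in> R\<^sup>*" "\<forall>i\<in>I. modeA' i (qs1 i) d \<or> frzp i (qs1 i) d" by auto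
  from joint[OF dk h(2) qs1(2)] obtain q' qs' where j: "((q,qs1,d),(q',qs',d+1)) \<in> R"
    "dstar dH q0 (Td (d+1)) = Some q'" "\<forall>i\<in>I. modeA i (qs' i) (d+1) \<or> frzp i (qs' i) (d+1)" by blast
  have "((q,qs,d),(q',qs',d+1)) \<in> R\<^sup>*" using qs1(1) j(1) by (rule rtrancl_into_rtrancl)
  then have "(q',qs',d+1) \<in> Reach" using h(1) reach_trans by blast
  then show ?case using j by auto
qed

lemma final: "\<exists>qs. (the (dstar dH q0 S), qs, k) \<in> Reach \<and> (\<forall>i\<in>I. \<sigma> \<in> Gam_aug Sig dH (No i) (qs i))"
proof -
  have kS: "k \<le> length S" using kdef by simp
  from loop[OF order_refl] obtain q qs where h: "(q,qs,k) \<in> Reach" "dstar dH q0 (Td k) = Some q"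
    "\<forall>i\<in>I. modeA i (qs i) k \<or> frzp i (qs i) k" by blast
  from prep_all[OF I_finite order_refl, of k qs q] h(3) obtain qs1 where
    qs1: "((q,qs,k),(q,qs1,k)) \<in> R\<^sup>*" "\<forall>i\<in>I. modeA' i (qs1 i) k \<or> frzp i (qs1 i) k" by auto
  have "\<forall>i\<in>I. frzp i (qs1 i) k"
  proof
    fix i assume "i \<in> I"
    moreover have "\<not> modeA' i (qs1 i) k" unfolding modeA'_def using kS by auto
    ultimately show "frzp i (qs1 i) k" using qs1(2) by blast
  qed
  moreover have "q = the (dstar dH q0 S)" using h(2) kS by simp
  moreover have "(q,qs1,k) \<in> Reach" using h(1) qs1(1) reach_trans by blast
  ultimately show ?thesis by (auto simp: frzp_def)
qed

end

theorem theorem2: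
  fixes Sig :: "'e set" and Q QH :: "'q set" and \<delta> \<delta>H :: "'q \<Rightarrow> 'e \<Rightarrow> 'q option" and q0 :: 'q
    and n :: nat and So Sc :: "nat \<Rightarrow> 'e set" and No :: "nat \<Rightarrow> nat" and \<sigma> :: 'e
  assumes G: "is_DFA Sig Q \<delta> q0"
    and H: "is_subaut Sig Q \<delta> QH \<delta>H q0"
    and So: "\<forall>i \<in> {1..n}. So i \<subseteq> Sig"
    and Sc: "\<forall>i \<in> {1..n}. Sc i \<subseteq> Sig"
    and sig: "\<sigma> \<in> (\<Union>i \<in> {1..n}. Sc i)"
  defines "N \<equiv> Max (No ` Ic n Sc \<sigma>)"
  shows "delay_coobservable (lang \<delta>H q0) (lang \<delta> q0) n So Sc No \<sigma> \<longleftrightarrow>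
    (\<forall>k \<in> {0..N}. \<not> (\<exists>q qs. (q, qs, k) \<in> ver_reach Sig \<delta>H q0 n So Sc No \<sigma> N k \<and>
        \<sigma> \<in> Gam \<delta> q - Gam \<delta>H q \<and>
        (\<forall>i \<in> Ic n Sc \<sigma>. \<sigma> \<in> Gam_aug Sig \<delta>H (No i) (qs i))))"
proof -
  have sigH: "\<forall>q e q'. \<delta>H q e = Some q' \<longrightarrow> e \<in> Sig" using H unfolding is_subaut_def is_DFA_def by blast
  have sub: "\<forall>q e q'. \<delta>H q e = Some q' \<longrightarrow> \<delta> q e = Some q'" using H unfolding is_subaut_def by blast
  have vfk: "\<And>k. vf Sig \<delta>H" using sigH by (simp add: vf_def)
  have finI: "finite (Ic n Sc \<sigma>)" unfolding Ic_def by simp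
  have NoN: "\<forall>i\<in>Ic n Sc \<sigma>. No i \<le> N" unfolding N_def using finI by simp
  show ?thesis
  proof
    assume coobs: "delay_coobservable (lang \<delta>H q0) (lang \<delta> q0) n So Sc No \<sigma>"
    show "\<forall>k \<in> {0..N}. \<not> (\<exists>q qs. (q, qs, k) \<in> ver_reach Sig \<delta>H q0 n So Sc No \<sigma> N k \<and>
        \<sigma> \<in> Gam \<delta> q - Gam \<delta>H q \<and>
        (\<forall>i \<in> Ic n Sc \<sigma>. \<sigma> \<in> Gam_aug Sig \<delta>H (No i) (qs i)))"
    proof (intro ballI notI)
      fix k assume "\<exists>q qs. (q, qs, k) \<in> ver_reach Sig \<delta>H q0 n So Sc No \<sigma> N k \<and>
        \<sigma> \<in> Gam \<delta> q - Gam \<delta>H q \<and>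
        (\<forall>i \<in> Ic n Sc \<sigma>. \<sigma> \<in> Gam_aug Sig \<delta>H (No i) (qs i))"
      then obtain q qs where r: "(q, qs, k) \<in> ver_reach Sig \<delta>H q0 n So Sc No \<sigma> N k"
        "\<sigma> \<in> Gam \<delta> q - Gam \<delta>H q" "\<forall>i \<in> Ic n Sc \<sigma>. \<sigma> \<in> Gam_aug Sig \<delta>H (No i) (qs i)"
        by blast
      show False by (rule vf.sound_dir[OF vfk coobs sub r(1) r(2) r(3)])
    qed
  next
    assume nobad: "\<forall>k \<in> {0..N}. \<not> (\<exists>q qs. (q, qs, k) \<in> ver_reach Sig \<delta>H q0 n So Sc No \<sigma> N k \<and>
        \<sigma> \<in> Gam \<delta> q - Gam \<delta>H q \<and>
        (\<forall>i \<in> Ic n Sc \<sigma>. \<sigma> \<in> Gam_aug Sig \<delta>H (No i) (qs i)))"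
    show "delay_coobservable (lang \<delta>H q0) (lang \<delta> q0) n So Sc No \<sigma>"
      unfolding delay_coobservable_def
    proof (intro ballI impI, rule ccontr)
      fix S assume SH: "S \<in> lang \<delta>H q0" and SG: "S @ [\<sigma>] \<in> lang \<delta> q0 - lang \<delta>H q0"
        and ne: "\<not> (\<exists>i\<in>Ic n Sc \<sigma>. {u @ [\<sigma>] |u. u \<in> Theta_inv_set (lang \<delta> q0) (So i) (No i) (Theta (So i) (No i) S)} \<inter> lang \<delta>H q0 = {})"
      define P where "P i u mm mm' \<longleftrightarrow> u \<in> lang \<delta> q0 \<and> u @ [\<sigma>] \<in> lang \<delta>H q0 \<and> mm \<le> No i \<and> mm' \<le> No i \<and>
          proj (So i) (trunc S mm) = proj (So i) (trunc u mm')" for i u mm mm'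
      have "\<forall>i\<in>Ic n Sc \<sigma>. \<exists>x. P i (fst x) (fst (snd x)) (snd (snd x))"
      proof
        fix i assume i: "i \<in> Ic n Sc \<sigma>"
        with ne obtain u where "u \<in> Theta_inv_set (lang \<delta> q0) (So i) (No i) (Theta (So i) (No i) S)" "u @ [\<sigma>] \<in> lang \<delta>H q0"
          by blast
        then have "\<exists>u mm mm'. P i u mm mm'"
          unfolding Theta_inv_set_def Theta_inv_def Theta_def P_def by auto
        then obtain u mm mm' where "P i u mm mm'" by blast
        then show "\<exists>x. P i (fst x) (fst (snd x)) (snd (snd x))" by (intro exI[of _ "(u, mm, mm')"]) simp
      qed
      from bchoice[OF this] obtain F where F: "\<forall>i\<in>Ic n Sc \<sigma>. P i (fst (F i)) (fst (snd (F i))) (snd (snd (F i)))"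
        by blast
      define uf where "uf i = fst (F i)" for i
      define mf where "mf i = fst (snd (F i))" for i
      define mf' where "mf' i = snd (snd (F i))" for i
      have U: "\<forall>i\<in>Ic n Sc \<sigma>. uf i \<in> lang \<delta> q0 \<and> uf i @ [\<sigma>] \<in> lang \<delta>H q0 \<and> mf i \<le> No i \<and> mf' i \<le> No i \<and>
          proj (So i) (trunc S (mf i)) = proj (So i) (trunc (uf i) (mf' i))"
        using F unfolding P_def uf_def mf_def mf'_def by blast
      define w where "w = (\<lambda>i. trunc (uf i) (mf' i))"
      define k where "k = min (length S) N"
      have wH: "\<forall>i\<in>Ic n Sc \<sigma>. dstar \<delta>H q0 (w i) \<noteq> None"
      proof
        fix i assume i: "i \<in> Ic n Sc \<sigma>"
        then have "dstar \<delta>H q0 (uf i @ [\<sigma>]) \<noteq> None" using U by (simp add: lang_def)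
        then have "dstar \<delta>H q0 (uf i) \<noteq> None" by (rule dstar_prefix)
        then show "dstar \<delta>H q0 (w i) \<noteq> None" unfolding w_def trunc_def by (rule dstar_take)
      qed
      have maug: "\<forall>i\<in>Ic n Sc \<sigma>. \<sigma> \<in> Gam_aug Sig \<delta>H (No i) (the (dstar \<delta>H q0 (w i)))"
      proof
        fix i assume i: "i \<in> Ic n Sc \<sigma>"
        define s' where "s' = drop (length (uf i) - mf' i) (uf i)"
        have us: "uf i = w i @ s'" unfolding w_def s'_def trunc_def by simp
        obtain p2 where p2: "dstar \<delta>H q0 (uf i) = Some p2" "\<delta>H p2 \<sigma> \<noteq> None"
          using U i unfolding lang_def by (auto simp: dstar_snoc split: option.splits)
        obtain p where p: "dstar \<delta>H q0 (w i) = Some p" using wH i by blast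
        have sp: "dstar \<delta>H p s' = Some p2" using p2(1) p us by (simp add: dstar_append)
        have "s' \<in> lists Sig" using dstar_Sig[OF sigH sp] by auto
        moreover have "length s' \<le> No i" using U i unfolding s'_def by auto
        ultimately show "\<sigma> \<in> Gam_aug Sig \<delta>H (No i) (the (dstar \<delta>H q0 (w i)))"
          using Gam_augI[OF sp] p2(2) p by (simp add: Gam_def)
      qed
      have v2: "vf2 Sig \<delta>H q0 n So Sc No \<sigma> N k S w mf"
        unfolding vf2_def
      proof (intro conjI vfk)
        show "vf2_axioms Sig \<delta>H q0 n So Sc No \<sigma> N k S w mf"
          unfolding vf2_axioms_def
        proof (intro conjI)
          show "dstar \<delta>H q0 S \<noteq> None" using SH by (simp add: lang_def)
          show "\<forall>i\<in>Ic n Sc \<sigma>. proj (So i) (w i) = proj (So i) (take (length S - mf i) S)"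
            using U unfolding w_def trunc_def by simp
          show "\<forall>i\<in>Ic n Sc \<sigma>. mf i \<le> No i" using U by blast
          show "k = min (length S) N" by (rule k_def)
        qed (use wH maug NoN in auto)
      qed
      from vf2.final[OF v2] obtain qs where qs: "(the (dstar \<delta>H q0 S), qs, k) \<in> ver_reach Sig \<delta>H q0 n So Sc No \<sigma> N k"
        "\<forall>i\<in>Ic n Sc \<sigma>. \<sigma> \<in> Gam_aug Sig \<delta>H (No i) (qs i)" by blast
      obtain q where q: "dstar \<delta>H q0 S = Some q" using SH unfolding lang_def by blast
      have "dstar \<delta> q0 S = Some q" using dstar_sub[OF sub q] .
      then have "\<sigma> \<in> Gam \<delta> q - Gam \<delta>H q" using SG q by (auto simp: lang_def dstar_snoc Gam_def)
      moreover have "k \<in> {0..N}" unfolding k_def by simp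
      moreover have "(q, qs, k) \<in> ver_reach Sig \<delta>H q0 n So Sc No \<sigma> N k" using qs(1) q by simp
      ultimately show False using nobad qs(2) by blast
    qed
  qed
qed

end
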